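(* Let $p>5$ be a prime and $k$ a positive integer with $k<p/4$. Set $D=\left\lceil \frac{2kp}{p-3}\right\rceil$. Then $D<p$, and for any $D$-APs $A_1,\dots,A_k\subseteq\mathbb{Z}_p$ we have $\big|\sum_{i=1}^k A_i\big| \le \frac{p-1}{2}$.
   Context: $\mathbb{Z}_p=\{0,\dots,p-1\}$ under addition mod $p$. Sumset: $\sum_{i=1}^k A_i=\{a_1+\dots+a_k\bmod p : a_i\in A_i\}$. For an integer $1\le D\le p-1$ and $b\in\{0,\dots,D-1\}$, the $D$-AP with base $b$ is $A_{(b)}=\{b+iD : i\text{ integer},\ 0\le i\le\lfloor (p-1-b)/D\rfloor\}\subseteq\mathbb{Z}_p$; a $D$-AP is any set of this form. *)

theory Defs
  imports Complex_Main "HOL-Computational_Algebra.Primes"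
begin

text \<open>Z_p is modelled as {0..p-1} of naturals with addition mod p.\<close>

definition D_AP :: "nat \<Rightarrow> nat \<Rightarrow> nat \<Rightarrow> nat set" where
  "D_AP p D b = {b + i * D | i. i \<le> (p - 1 - b) div D}"

definition is_D_AP :: "nat \<Rightarrow> nat \<Rightarrow> nat set \<Rightarrow> bool" where
  "is_D_AP p D A \<longleftrightarrow> (\<exists>b<D. A = D_AP p D b)"

definition sumset_mod :: "nat \<Rightarrow> nat \<Rightarrow> (nat \<Rightarrow> nat set) \<Rightarrow> nat set" where
  "sumset_mod p k A = {(\<Sum>i=1..k. a i) mod p | a. \<forall>i\<in>{1..k}. a i \<in> A i}"

end

theory Submission
  imports Defs
begin

lemma card_bound:
  fixes p k D :: nat and A :: "nat \<Rightarrow> nat set"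
  assumes D: "D > 0" and p: "p > 0"
    and H: "\<forall>i\<in>{1..k}. is_D_AP p D (A i)"
  shows "card (sumset_mod p k A) \<le> k * ((p - 1) div D) + 1"
proof -
  define M where "M = (p - 1) div D"
  have "\<forall>i\<in>{1..k}. \<exists>b. b < D \<and> A i = D_AP p D b" using H unfolding is_D_AP_def by blast
  then obtain b where b: "\<And>i. i \<in> {1..k} \<Longrightarrow> A i = D_AP p D (b i)" by metis
  define B where "B = (\<Sum>i=1..k. b i)"
  have sub: "sumset_mod p k A \<subseteq> (\<lambda>J. (B + J * D) mod p) ` {0..k*M}"
  proof
    fix x assume "x \<in> sumset_mod p k A"
    then obtain a where x: "x = (\<Sum>i=1..k. a i) mod p" and a: "\<forall>i\<in>{1..k}. a i \<in> A i"
      unfolding sumset_mod_def by blast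
    have "\<forall>i\<in>{1..k}. \<exists>j. j \<le> M \<and> a i = b i + j * D"
    proof
      fix i assume i: "i \<in> {1..k}"
      then have "a i \<in> D_AP p D (b i)" using a b by auto
      then obtain j where j: "j \<le> (p - 1 - b i) div D" "a i = b i + j * D"
        unfolding D_AP_def by blast
      have "(p - 1 - b i) div D \<le> M" unfolding M_def by (simp add: div_le_mono)
      then show "\<exists>j. j \<le> M \<and> a i = b i + j * D" using j by (intro exI[of _ j]) auto
    qed
    then obtain j where j: "\<And>i. i \<in> {1..k} \<Longrightarrow> j i \<le> M \<and> a i = b i + j i * D" by metis
    have "(\<Sum>i=1..k. a i) = (\<Sum>i=1..k. b i + j i * D)" using j by (intro sum.cong) auto
    also have "\<dots> = B + (\<Sum>i=1..k. j i) * D" by (simp add: B_def sum.distrib sum_distrib_right)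
    finally have xs: "x = (B + (\<Sum>i=1..k. j i) * D) mod p" using x by simp
    have "(\<Sum>i=1..k. j i) \<le> (\<Sum>i=1..k. M)" using j by (intro sum_mono) auto
    then have "(\<Sum>i=1..k. j i) \<le> k * M" by simp
    then show "x \<in> (\<lambda>J. (B + J * D) mod p) ` {0..k*M}" using xs by auto
  qed
  have "card (sumset_mod p k A) \<le> card ((\<lambda>J. (B + J * D) mod p) ` {0..k*M})"
    by (rule card_mono[OF _ sub]) simp
  also have "\<dots> \<le> card {0..k*M}" by (rule card_image_le) simp
  finally show ?thesis by (simp add: M_def)
qed

theorem lemma3p2:
  fixes p k D :: nat and A :: "nat \<Rightarrow> nat set"
  assumes "prime p" and "p > 5" and "k \<ge> 1" and "real k < real p / 4"
    and "D = nat \<lceil>2 * real k * real p / (real p - 3)\<rceil>"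
  shows "D < p \<and>
    ((\<forall>i\<in>{1..k}. is_D_AP p D (A i)) \<longrightarrow> 2 * card (sumset_mod p k A) \<le> p - 1)"
proof -
  have p3: "real p - 3 > 0" using assms(2) by simp
  have k4: "4 * k \<le> p - 1" using assms(4) by linarith
  have "2 * k * p \<le> (p - 1) * (p - 3)"
  proof -
    have "4 * k * p \<le> (p - 1) * p" using k4 by (metis mult_le_mono1 mult.assoc)
    also have "\<dots> \<le> (p - 1) * (2 * (p - 3))" using assms(2) by (intro mult_le_mono2) linarith
    finally show ?thesis by simp
  qed
  then have "real (2 * k * p) \<le> real ((p - 1) * (p - 3))" by linarith
  then have r1: "2 * real k * real p \<le> (real p - 1) * (real p - 3)"
    using assms(2) by (simp add: of_nat_diff)
  have "2 * real k * real p / (real p - 3) \<le> real p - 1"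
    using r1 p3 by (simp add: divide_le_eq)
  then have "\<lceil>2 * real k * real p / (real p - 3)\<rceil> \<le> int p - 1"
    by (simp add: ceiling_le_iff) linarith
  then have Dp: "D < p" using assms(5) assms(2) by linarith
  have "real D \<ge> 2 * real k * real p / (real p - 3)"
  proof -
    have "0 \<le> 2 * real k * real p / (real p - 3)" using p3 by simp
    then have "0 \<le> \<lceil>2 * real k * real p / (real p - 3)\<rceil>" by simp
    then have "real D = of_int \<lceil>2 * real k * real p / (real p - 3)\<rceil>" using assms(5) by simp
    then show ?thesis by simp
  qed
  then have "real D * (real p - 3) \<ge> 2 * real k * real p" using p3 by (simp add: divide_le_eq mult.commute)
  then have "real (D * (p - 3)) \<ge> real (2 * k * p)" using assms(2) by (simp add: of_nat_diff)
  then have Dk: "D * (p - 3) \<ge> 2 * k * p" by linarith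
  have D0: "D > 0" using Dk assms(3) assms(2) by (cases D) auto
  have rest: "2 * card (sumset_mod p k A) \<le> p - 1" if H: "\<forall>i\<in>{1..k}. is_D_AP p D (A i)"
  proof -
    define M where "M = (p - 1) div D"
    have c: "card (sumset_mod p k A) \<le> k * M + 1" using card_bound[OF D0 _ H] assms(2) M_def by simp
    have MD: "M * D \<le> p - 1" unfolding M_def by (rule div_times_less_eq_dividend)
    have "k * M * (2 * k * p) \<le> k * M * (D * (p - 3))" using Dk by simp
    also have "\<dots> = k * ((M * D) * (p - 3))" by simp
    also have "\<dots> \<le> k * ((p - 1) * (p - 3))" using MD by simp
    finally have "k * (2 * M * p * k) \<le> k * ((p - 1) * (p - 3))" by (simp only: ac_simps)
    then have e: "2 * M * p * k \<le> (p - 1) * (p - 3)" using assms(3) by (simp only: mult_le_cancel1)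
    have "(p - 1) * (p - 3) < p * (p - 3)" using assms(2) by simp
    with e have "(2 * k * M) * p < (p - 3) * p" by (simp add: algebra_simps)
    then have "2 * k * M < p - 3" by (meson mult_less_cancel2)
    then show ?thesis using c by linarith
  qed
  show ?thesis using Dp rest by blast
qed

end
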